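(* In the FAVANO process, assume each $\nabla f_i$ is $L$-Lipschitz and the stochastic gradients have bounded variance $\sigma^2$, and assume $\eta<\frac{1}{4LK^2}$. Then for every client $i$, every time step $t\ge0$ and every local step $q\in\{1,\dots,K\}$, $$\mathbb{E}\|h^i_{t+1,q}\|^2\le B^i_t:=\frac{\sigma^2}{K^2}+16L^2\,\mathbb{E}\|w^i_t-\mu_t\|^2+8\,\mathbb{E}\|\nabla f_i(\mu_t)\|^2 .$$
   Context: FAVANO process. Fix integers $n\ge1$, $1\le s\le n$, $K\ge1$, $d\ge1$, a step size $\eta>0$ and differentiable $f_1,\dots,f_n:\mathbb{R}^d\to\mathbb{R}$, $f=\frac1n\sum_i f_i$. All random variables live on one probability space. For each client $i$ a stochastic gradient oracle returns, at a query point $x$, $\widetilde g^i(x)=\nabla f_i(x)+\xi$ where, conditionally on everything generated before the query (including $x$), $\xi$ has mean zero (each query uses fresh noise). Initialize $w_0\in\mathbb{R}^d$ deterministic and $w_0^i=w_0$ for all $i$. For each $t\ge1$, each client $i$ and each $q\ge1$ define recursively $\widetilde h^i_{t,q}=\widetilde g^i\big(w^i_{t-1}-\eta\sum_{r=1}^{q-1}\widetilde h^i_{t,r}\big)$ and $h^i_{t,q}=\nabla f_i\big(w^i_{t-1}-\eta\sum_{r=1}^{q-1}\widetilde h^i_{t,r}\big)$. At each $t\ge1$ there are random integers $E^1_t,\dots,E^n_t\ge0$ with $\mathbf{P}(E^i_t>0)>0$, and a random subset $\mathcal{S}_t\subseteq\{1,\dots,n\}$ uniformly distributed among subsets of size $s$;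 the family $(\mathcal S_t,E^1_t,\dots,E^n_t)$ is independent of all the other randomness (the past up to time $t-1$ and all $\widetilde h^i_{t,q}$), and $\mathcal S_t$ is independent of $(E^i_t)_i$. The weight $\alpha^i_t$ is either $\mathbf{P}(E^i_t>0)\,(E^i_t\wedge K)$ (stochastic version) or $\mathbb{E}[E^i_t\wedge K]$ (deterministic version), where $a\wedge b=\min(a,b)$. Set $\check h^i_t=\frac{1}{\alpha^i_t}\sum_{q=1}^{E^i_t\wedge K}\widetilde h^i_{t,q}$ if $E^i_t>0$ and $\check h^i_t=0$ otherwise. Updates: $w_t=\frac{1}{s+1}\big(w_{t-1}+\sum_{i\in\mathcal S_t}(w^i_{t-1}-\eta\check h^i_t)\big)$; $w^i_t=w_t$ for $i\in\mathcal S_t$ and $w^i_t=w^i_{t-1}$ for $i\notin\mathcal S_t$. Define $\mu_t=\frac{1}{n+1}\big(w_t+\sum_{i=1}^n w^i_t\big)$. All expectations appearing are assumed finite. Smoothness: $\|\nabla f_i(x)-\nabla f_i(y)\|\le L\|x-y\|$ for all $i,x,y$, with $L>0$. Bounded variance: conditionally on everything generated before a query at $x$, $\mathbb{E}\|\widetilde g^i(x)-\nabla f_i(x)\|^2\le\sigma^2$. *)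

theory Defs
  imports "HOL-Probability.Probability"
begin

text \<open>Given the client's starting point x, the gradient field g of f_i, step size eta and the
  oracle noises xi q (noise of the q-th query, q >= 1), favano_psum ... q is
  the sum of htilde_r for r = 1..q, where
  htilde_r = g (x - eta * sum_{r'<r} htilde_r') + xi r.\<close>

fun favano_psum :: "('a::real_normed_vector \<Rightarrow> 'a) \<Rightarrow> real \<Rightarrow> 'a \<Rightarrow> (nat \<Rightarrow> 'a) \<Rightarrow> nat \<Rightarrow> 'a" where
  "favano_psum g eta x xi 0 = 0"
| "favano_psum g eta x xi (Suc q) =
     favano_psum g eta x xi q + (g (x - eta *\<^sub>R favano_psum g eta x xi q) + xi (Suc q))"

definition favano_query :: "('a::real_normed_vector \<Rightarrow> 'a) \<Rightarrow> real \<Rightarrow> 'a \<Rightarrow> (nat \<Rightarrow> 'a) \<Rightarrow> nat \<Rightarrow> 'a" where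
  "favano_query g eta x xi q = x - eta *\<^sub>R favano_psum g eta x xi (q - 1)"

definition favano_htil :: "('a::real_normed_vector \<Rightarrow> 'a) \<Rightarrow> real \<Rightarrow> 'a \<Rightarrow> (nat \<Rightarrow> 'a) \<Rightarrow> nat \<Rightarrow> 'a" where
  "favano_htil g eta x xi q = g (favano_query g eta x xi q) + xi q"

definition favano_alpha :: "bool \<Rightarrow> 'm measure \<Rightarrow> (nat \<Rightarrow> nat \<Rightarrow> 'm \<Rightarrow> nat) \<Rightarrow> nat
    \<Rightarrow> nat \<Rightarrow> nat \<Rightarrow> 'm \<Rightarrow> real" where
  "favano_alpha stoch M E K t i \<omega> =
     (if stoch then measure M {\<omega>'\<in>space M. E t i \<omega>' > 0} * real (min (E t i \<omega>) K)
      else (\<integral>\<omega>'. real (min (E t i \<omega>') K) \<partial>M))"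

text \<open>State (w_t, (w^i_t)_i) of the process at time t, as a function of the outcome omega.
  grad i is the gradient of f_i, xi t i q \<omega> is the noise of the oracle answer htilde^i_{t,q},
  S t \<omega> is the sampled set S_t and E t i \<omega> is E^i_t.\<close>
fun favano_state :: "'m measure \<Rightarrow> bool \<Rightarrow> (nat \<Rightarrow> 'a::real_normed_vector \<Rightarrow> 'a) \<Rightarrow> real \<Rightarrow> nat \<Rightarrow> nat
    \<Rightarrow> 'a \<Rightarrow> (nat \<Rightarrow> nat \<Rightarrow> nat \<Rightarrow> 'm \<Rightarrow> 'a) \<Rightarrow> (nat \<Rightarrow> 'm \<Rightarrow> nat set)
    \<Rightarrow> (nat \<Rightarrow> nat \<Rightarrow> 'm \<Rightarrow> nat) \<Rightarrow> nat \<Rightarrow> 'm \<Rightarrow> 'a \<times> (nat \<Rightarrow> 'a)" where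
  "favano_state M stoch grad eta K s w0 xi S E 0 \<omega> = (w0, (\<lambda>i. w0))"
| "favano_state M stoch grad eta K s w0 xi S E (Suc t) \<omega> =
     (let (w, W) = favano_state M stoch grad eta K s w0 xi S E t \<omega>;
          hchk = (\<lambda>i. if E (Suc t) i \<omega> > 0
                      then (1 / favano_alpha stoch M E K (Suc t) i \<omega>) *\<^sub>R
                           (\<Sum>q = 1..min (E (Suc t) i \<omega>) K.
                               favano_htil (grad i) eta (W i) (\<lambda>r. xi (Suc t) i r \<omega>) q)
                      else 0);
          w' = (1 / (real s + 1)) *\<^sub>R (w + (\<Sum>i\<in>S (Suc t) \<omega>. W i - eta *\<^sub>R hchk i))
      in (w', (\<lambda>i. if i \<in> S (Suc t) \<omega> then w' else W i)))"

definition favano_mu :: "nat \<Rightarrow> 'a::real_normed_vector \<times> (nat \<Rightarrow> 'a) \<Rightarrow> 'a" where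
  "favano_mu n st = (1 / (real n + 1)) *\<^sub>R (fst st + (\<Sum>i = 1..n. snd st i))"

text \<open>Generators of the information available before the q-th query of client i in round t:
  all randomness of rounds 1..t-1 (noises of all clients and all local steps, S, E) and the
  noises of the first q-1 queries of client i in round t.\<close>
definition favano_past_events :: "'m measure \<Rightarrow> nat \<Rightarrow> (nat \<Rightarrow> nat \<Rightarrow> nat \<Rightarrow> 'm \<Rightarrow> 'a::topological_space)
    \<Rightarrow> (nat \<Rightarrow> 'm \<Rightarrow> nat set) \<Rightarrow> (nat \<Rightarrow> nat \<Rightarrow> 'm \<Rightarrow> nat) \<Rightarrow> nat \<Rightarrow> nat \<Rightarrow> nat \<Rightarrow> 'm set set" where
  "favano_past_events M n xi S E t i q =
     {xi t' j r -` B \<inter> space M | t' j r B. 1 \<le> t' \<and> t' < t \<and> j \<in> {1..n} \<and> 1 \<le> r \<and> B \<in> sets borel}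
   \<union> {S t' -` A \<inter> space M | t' A. 1 \<le> t' \<and> t' < t}
   \<union> {E t' j -` A \<inter> space M | t' j A. 1 \<le> t' \<and> t' < t \<and> j \<in> {1..n}}
   \<union> {xi t i r -` B \<inter> space M | r B. 1 \<le> r \<and> r < q \<and> B \<in> sets borel}"

text \<open>Generators of: the past up to time t-1 and all noises (hence all htilde) of round t.\<close>
definition favano_other_events :: "'m measure \<Rightarrow> nat \<Rightarrow> (nat \<Rightarrow> nat \<Rightarrow> nat \<Rightarrow> 'm \<Rightarrow> 'a::topological_space)
    \<Rightarrow> (nat \<Rightarrow> 'm \<Rightarrow> nat set) \<Rightarrow> (nat \<Rightarrow> nat \<Rightarrow> 'm \<Rightarrow> nat) \<Rightarrow> nat \<Rightarrow> 'm set set" where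
  "favano_other_events M n xi S E t =
     {xi t' j r -` B \<inter> space M | t' j r B. 1 \<le> t' \<and> t' \<le> t \<and> j \<in> {1..n} \<and> 1 \<le> r \<and> B \<in> sets borel}
   \<union> {S t' -` A \<inter> space M | t' A. 1 \<le> t' \<and> t' < t}
   \<union> {E t' j -` A \<inter> space M | t' j A. 1 \<le> t' \<and> t' < t \<and> j \<in> {1..n}}"

definition favano_S_events :: "'m measure \<Rightarrow> (nat \<Rightarrow> 'm \<Rightarrow> nat set) \<Rightarrow> nat \<Rightarrow> 'm set set" where
  "favano_S_events M S t = {S t -` A \<inter> space M | A. True}"

definition favano_E_events :: "'m measure \<Rightarrow> nat \<Rightarrow> (nat \<Rightarrow> nat \<Rightarrow> 'm \<Rightarrow> nat) \<Rightarrow> nat \<Rightarrow> 'm set set" where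
  "favano_E_events M n E t = {E t j -` A \<inter> space M | j A. j \<in> {1..n}}"

end

theory Submission imports Defs begin

lemma psum_eq: "favano_psum g eta x xi m = (\<Sum>r=1..m. g (favano_query g eta x xi r) + xi r)"
  by (induction m) (simp_all add: favano_query_def)

lemma pw:
  fixes g :: "'a::real_normed_vector \<Rightarrow> 'a"
  assumes smooth: "\<And>x y. norm (g x - g y) \<le> L * norm (x - y)" and L: "0 \<le> L" and q: "1 \<le> q"
  shows "(norm (g (favano_query g eta x xi q)))\<^sup>2 \<le> 4*L\<^sup>2*(norm (x - m))\<^sup>2 + 4*(norm (g m))\<^sup>2
     + 4*L\<^sup>2*eta\<^sup>2*real(q-1) * (\<Sum>r=1..q-1. (norm (g (favano_query g eta x xi r)))\<^sup>2 + (norm (xi r))\<^sup>2)"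
proof -
  have sq: "\<And>A B::real. (A+B)\<^sup>2 \<le> 2*A\<^sup>2 + 2*B\<^sup>2"
  proof -
    fix A B :: real
    have "(A+B)\<^sup>2 + (A-B)\<^sup>2 = 2*A\<^sup>2+2*B\<^sup>2" by (simp add: power2_eq_square algebra_simps)
    moreover have "0 \<le> (A-B)\<^sup>2" by simp
    ultimately show "(A+B)\<^sup>2 \<le> 2*A\<^sup>2 + 2*B\<^sup>2" by linarith
  qed
  define S where "S = favano_psum g eta x xi (q-1)"
  have qe: "favano_query g eta x xi q = x - eta *\<^sub>R S" by (simp add: favano_query_def S_def)
  have a: "norm (g (favano_query g eta x xi q)) \<le> norm (g x) + L*\<bar>eta\<bar>*norm S"
  proof -
    have "norm (g (x - eta *\<^sub>R S) - g x) \<le> L * norm (x - eta *\<^sub>R S - x)" by (rule smooth)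
    hence "norm (g (x - eta *\<^sub>R S) - g x) \<le> L*\<bar>eta\<bar>*norm S" by simp
    thus ?thesis unfolding qe by (metis add.commute diff_add_cancel norm_triangle_le order.trans add_mono_thms_linordered_semiring(3) order_refl)
  qed
  have b: "norm (g x) \<le> norm (g m) + L * norm (x - m)"
    using smooth[of x m] norm_triangle_ineq2[of "g x" "g m"] by linarith
  define u where "u r = norm (g (favano_query g eta x xi r)) + norm (xi r)" for r
  have nS: "norm S \<le> (\<Sum>r=1..q-1. u r)"
    unfolding S_def psum_eq u_def
    by (rule order.trans[OF norm_sum]) (auto intro!: sum_mono norm_triangle_ineq)
  have "(norm S)\<^sup>2 \<le> (\<Sum>r=1..q-1. u r)\<^sup>2"
    using nS by (simp add: power_mono)
  also have "\<dots> \<le> (\<Sum>r=1..q-1. (u r)\<^sup>2) * real (q-1)"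
    using sum_squared_le_sum_of_squares[of u "{1..q-1}"] by simp
  also have "\<dots> \<le> (\<Sum>r=1..q-1. 2*((norm (g (favano_query g eta x xi r)))\<^sup>2 + (norm (xi r))\<^sup>2)) * real (q-1)"
    apply (rule mult_right_mono)
     apply (rule sum_mono)
    unfolding u_def
     apply (subst distrib_left)
     apply (rule sq)
    by simp
  finally have c0: "(norm S)\<^sup>2 \<le> (\<Sum>r=1..q-1. 2*((norm (g (favano_query g eta x xi r)))\<^sup>2 + (norm (xi r))\<^sup>2)) * real (q-1)" .
  have e: "(\<Sum>r=1..q-1. 2*((norm (g (favano_query g eta x xi r)))\<^sup>2 + (norm (xi r))\<^sup>2)) = 2 * (\<Sum>r=1..q-1. (norm (g (favano_query g eta x xi r)))\<^sup>2 + (norm (xi r))\<^sup>2)"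
    by (rule sum_distrib_left[symmetric])
  have c: "(norm S)\<^sup>2 \<le> 2 * real (q-1) * (\<Sum>r=1..q-1. (norm (g (favano_query g eta x xi r)))\<^sup>2 + (norm (xi r))\<^sup>2)"
    using c0 unfolding e by (simp add: mult_ac)
  have "(norm (g (favano_query g eta x xi q)))\<^sup>2 \<le> (norm (g x) + L*\<bar>eta\<bar>*norm S)\<^sup>2"
    using a by (simp add: power_mono)
  also have "\<dots> \<le> 2*(norm (g x))\<^sup>2 + 2*(L*\<bar>eta\<bar>*norm S)\<^sup>2" by (rule sq)
  also have "(norm (g x))\<^sup>2 \<le> (norm (g m) + L * norm (x - m))\<^sup>2" using b by (simp add: power_mono)
  also have "\<dots> \<le> 2*(norm (g m))\<^sup>2 + 2*(L * norm (x - m))\<^sup>2" by (rule sq)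
  finally have d: "(norm (g (favano_query g eta x xi q)))\<^sup>2 \<le> 4*L\<^sup>2*(norm (x - m))\<^sup>2 + 4*(norm (g m))\<^sup>2 + 2*L\<^sup>2*eta\<^sup>2*(norm S)\<^sup>2"
    by (simp add: power_mult_distrib)
  have "2*L\<^sup>2*eta\<^sup>2*(norm S)\<^sup>2 \<le> 2*L\<^sup>2*eta\<^sup>2*(2 * real (q-1) * (\<Sum>r=1..q-1. (norm (g (favano_query g eta x xi r)))\<^sup>2 + (norm (xi r))\<^sup>2))"
    using c by (intro mult_left_mono) auto
  with d show ?thesis by (simp add: mult_ac)
qed

lemma main_abs:
  fixes g :: "'a::real_normed_vector \<Rightarrow> 'a" and xx mm :: "'m \<Rightarrow> 'a" and X :: "'m \<Rightarrow> nat \<Rightarrow> 'a"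
  assumes P: "prob_space M"
    and smooth: "\<And>x y. norm (g x - g y) \<le> L * norm (x - y)" and L: "0 < L" and eta: "0 < eta"
    and eta_small: "eta < 1 / (4 * L * real K ^ 2)" and K: "1 \<le> K"
    and int_h: "\<And>q. 1 \<le> q \<Longrightarrow> integrable M (\<lambda>\<omega>. (norm (g (favano_query g eta (xx \<omega>) (X \<omega>) q)))\<^sup>2)"
    and int_X: "\<And>q. 1 \<le> q \<Longrightarrow> integrable M (\<lambda>\<omega>. (norm (X \<omega> q))\<^sup>2)"
    and bnd_X: "\<And>q. 1 \<le> q \<Longrightarrow> (\<integral>\<omega>. (norm (X \<omega> q))\<^sup>2 \<partial>M) \<le> \<sigma>\<^sup>2"
    and int_dev: "integrable M (\<lambda>\<omega>. (norm (xx \<omega> - mm \<omega>))\<^sup>2)"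
    and int_gm: "integrable M (\<lambda>\<omega>. (norm (g (mm \<omega>)))\<^sup>2)"
  shows "\<forall>q \<in> {1..K}. (\<integral>\<omega>. (norm (g (favano_query g eta (xx \<omega>) (X \<omega>) q)))\<^sup>2 \<partial>M)
     \<le> \<sigma>\<^sup>2 / real K ^ 2 + 16 * L\<^sup>2 * (\<integral>\<omega>. (norm (xx \<omega> - mm \<omega>))\<^sup>2 \<partial>M)
       + 8 * (\<integral>\<omega>. (norm (g (mm \<omega>)))\<^sup>2 \<partial>M)"
proof -
  define H where "H q = (\<integral>\<omega>. (norm (g (favano_query g eta (xx \<omega>) (X \<omega>) q)))\<^sup>2 \<partial>M)" for q
  define ED where "ED = (\<integral>\<omega>. (norm (xx \<omega> - mm \<omega>))\<^sup>2 \<partial>M)"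
  define EG where "EG = (\<integral>\<omega>. (norm (g (mm \<omega>)))\<^sup>2 \<partial>M)"
  define B where "B = \<sigma>\<^sup>2 / real K ^ 2 + 16 * L\<^sup>2 * ED + 8 * EG"
  have ED0: "0 \<le> ED" unfolding ED_def by (rule integral_nonneg_AE) auto
  have EG0: "0 \<le> EG" unfolding EG_def by (rule integral_nonneg_AE) auto
  have Kr: "(1::real) \<le> real K" using K by simp
  have LeK: "16 * (L*eta)\<^sup>2 * real K ^ 4 \<le> 1"
  proof -
    have "L * eta * (4 * real K ^ 2) < 1"
      using eta_small L Kr by (simp add: field_simps)
    moreover have "0 \<le> L * eta * (4 * real K ^ 2)" using L eta by simp
    ultimately have "(L * eta * (4 * real K ^ 2))\<^sup>2 \<le> 1"
      by (simp add: power_le_one)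
    thus ?thesis by (simp add: power2_eq_square power4_eq_xxxx algebra_simps)
  qed
  have main: "1 \<le> q \<Longrightarrow> q \<le> K \<Longrightarrow> H q \<le> B" for q
  proof (induction q rule: less_induct)
    case (less q)
    define c where "c = 4*L\<^sup>2*eta\<^sup>2*real(q-1)"
    have c0: "0 \<le> c" unfolding c_def by simp
    have intsum: "integrable M (\<lambda>\<omega>. \<Sum>r=1..q-1. (norm (g (favano_query g eta (xx \<omega>) (X \<omega>) r)))\<^sup>2 + (norm (X \<omega> r))\<^sup>2)"
      apply (rule Bochner_Integration.integrable_sum, rule Bochner_Integration.integrable_add)
      using int_h int_X by auto
    have "H q \<le> (\<integral>\<omega>. 4*L\<^sup>2*(norm (xx \<omega> - mm \<omega>))\<^sup>2 + 4*(norm (g (mm \<omega>)))\<^sup>2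
       + c * (\<Sum>r=1..q-1. (norm (g (favano_query g eta (xx \<omega>) (X \<omega>) r)))\<^sup>2 + (norm (X \<omega> r))\<^sup>2) \<partial>M)"
      unfolding H_def c_def
      apply (rule integral_mono)
        apply (rule int_h, rule less.prems)
      using int_dev int_gm intsum apply (intro Bochner_Integration.integrable_add Bochner_Integration.integrable_mult_right) apply auto[3]
      apply (rule pw[OF smooth]) using L less.prems by auto
    also have "\<dots> = 4*L\<^sup>2*ED + 4*EG + c * (\<Sum>r=1..q-1. H r + (\<integral>\<omega>. (norm (X \<omega> r))\<^sup>2 \<partial>M))"
      unfolding ED_def EG_def H_def
      using int_dev int_gm intsum int_h int_X
      by (simp add: Bochner_Integration.integral_add Bochner_Integration.integral_sum Bochner_Integration.integrable_sum Bochner_Integration.integrable_add)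
    also have "\<dots> \<le> 4*L\<^sup>2*ED + 4*EG + c * (\<Sum>r=1..q-1. B + \<sigma>\<^sup>2)"
      apply (intro add_left_mono mult_left_mono sum_mono add_mono c0)
      using less.IH less.prems bnd_X by auto
    also have "\<dots> = 4*L\<^sup>2*ED + 4*EG + c * real (q-1) * (B + \<sigma>\<^sup>2)" by simp
    also have "\<dots> \<le> B"
    proof -
      have q1: "real (q-1) \<le> real K" using less.prems by simp
      have B0: "0 \<le> B" unfolding B_def using ED0 EG0 by simp
      have "c * real (q-1) = 4*(L*eta)\<^sup>2*(real (q-1))\<^sup>2" unfolding c_def by (simp add: power2_eq_square algebra_simps)
      also have "\<dots> \<le> 4*(L*eta)\<^sup>2*(real K)\<^sup>2" using q1 by (intro mult_left_mono power_mono) auto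
      also have "\<dots> \<le> 1 / (4 * (real K)\<^sup>2)"
        using LeK Kr by (simp add: field_simps power4_eq_xxxx power2_eq_square)
      finally have cq: "c * real (q-1) \<le> 1 / (4 * (real K)\<^sup>2)" .
      have "c * real (q-1) * (B + \<sigma>\<^sup>2) \<le> 1 / (4 * (real K)\<^sup>2) * (B + \<sigma>\<^sup>2)"
        using cq B0 by (intro mult_right_mono) auto
      also have "\<dots> \<le> B/4 + \<sigma>\<^sup>2 / (4 * (real K)\<^sup>2)"
      proof -
        have K2: "1 \<le> (real K)\<^sup>2" using Kr by (simp add: one_le_power)
        have "B * 1 \<le> B * (real K)\<^sup>2" using B0 K2 by (rule mult_left_mono[rotated])
        hence "1 / (4 * (real K)\<^sup>2) * B \<le> B/4" using B0 Kr by (simp add: field_simps)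
        thus ?thesis by (simp add: distrib_left)
      qed
      finally have t: "c * real (q-1) * (B + \<sigma>\<^sup>2) \<le> B/4 + \<sigma>\<^sup>2 / (4 * (real K)\<^sup>2)" .
      define Q where "Q = \<sigma>\<^sup>2 / (real K)\<^sup>2"
      have Qe: "\<sigma>\<^sup>2 / (4 * (real K)\<^sup>2) = Q/4" unfolding Q_def by simp
      have a0: "0 \<le> L\<^sup>2 * ED" using ED0 by simp
      have Be: "B = Q + 16 * (L\<^sup>2 * ED) + 8 * EG" unfolding B_def Q_def by simp
      have t2: "c * real (q-1) * (B + \<sigma>\<^sup>2) \<le> B/4 + Q/4" using t unfolding Qe .
      have "4*L\<^sup>2*ED = 4*(L\<^sup>2*ED)" by simp
      have Q0: "0 \<le> Q" unfolding Q_def by simp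
      thus ?thesis using t2 a0 EG0 Be \<open>4*L\<^sup>2*ED = 4*(L\<^sup>2*ED)\<close> by linarith
    qed
    finally show ?case by (simp add: H_def)
  qed
  show ?thesis using main unfolding H_def B_def ED_def EG_def by auto
qed

theorem mainTheorem5:
  fixes M :: "'m measure"
    and n s K :: nat and eta L \<sigma> :: real and stoch :: bool
    and f :: "nat \<Rightarrow> 'a::euclidean_space \<Rightarrow> real" and grad :: "nat \<Rightarrow> 'a \<Rightarrow> 'a"
    and w0 :: 'a
    and xi :: "nat \<Rightarrow> nat \<Rightarrow> nat \<Rightarrow> 'm \<Rightarrow> 'a"
    and S :: "nat \<Rightarrow> 'm \<Rightarrow> nat set"
    and E :: "nat \<Rightarrow> nat \<Rightarrow> 'm \<Rightarrow> nat"
  assumes prob: "prob_space M"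
    and n_pos: "1 \<le> n" and s_range: "1 \<le> s" "s \<le> n" and K_pos: "1 \<le> K"
    and eta_pos: "0 < eta"
    and grad_f: "\<And>i x. i \<in> {1..n} \<Longrightarrow> GDERIV (f i) x :> grad i x"
    and L_pos: "0 < L"
    and smooth: "\<And>i x y. i \<in> {1..n} \<Longrightarrow> norm (grad i x - grad i y) \<le> L * norm (x - y)"
    and eta_small: "eta < 1 / (4 * L * real K ^ 2)"
    \<comment> \<open>oracle noise: measurable, finite second moment, conditionally (on everything before the query)
        mean zero with conditional second moment at most sigma^2\<close>
    and xi_meas: "\<And>t i q. 1 \<le> t \<Longrightarrow> i \<in> {1..n} \<Longrightarrow> 1 \<le> q \<Longrightarrow> xi t i q \<in> borel_measurable M"
    and xi_sq_int: "\<And>t i q. 1 \<le> t \<Longrightarrow> i \<in> {1..n} \<Longrightarrow> 1 \<le> q \<Longrightarrow>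
                      integrable M (\<lambda>\<omega>. (norm (xi t i q \<omega>))\<^sup>2)"
    and xi_mean0: "\<And>t i q A. 1 \<le> t \<Longrightarrow> i \<in> {1..n} \<Longrightarrow> 1 \<le> q \<Longrightarrow>
                      A \<in> sigma_sets (space M) (favano_past_events M n xi S E t i q) \<Longrightarrow>
                      (LINT \<omega>:A|M. xi t i q \<omega>) = 0"
    and xi_var: "\<And>t i q A. 1 \<le> t \<Longrightarrow> i \<in> {1..n} \<Longrightarrow> 1 \<le> q \<Longrightarrow>
                      A \<in> sigma_sets (space M) (favano_past_events M n xi S E t i q) \<Longrightarrow>
                      (LINT \<omega>:A|M. (norm (xi t i q \<omega>))\<^sup>2) \<le> \<sigma>\<^sup>2 * measure M A"
    \<comment> \<open>client sampling and numbers of local steps\<close>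
    and S_meas: "\<And>t. 1 \<le> t \<Longrightarrow> S t \<in> measurable M (count_space UNIV)"
    and S_vals: "\<And>t \<omega>. 1 \<le> t \<Longrightarrow> \<omega> \<in> space M \<Longrightarrow> S t \<omega> \<subseteq> {1..n} \<and> card (S t \<omega>) = s"
    and S_unif: "\<And>t A. 1 \<le> t \<Longrightarrow> A \<subseteq> {1..n} \<Longrightarrow> card A = s \<Longrightarrow>
                   measure M {\<omega> \<in> space M. S t \<omega> = A} = 1 / real (n choose s)"
    and E_meas: "\<And>t i. 1 \<le> t \<Longrightarrow> i \<in> {1..n} \<Longrightarrow> E t i \<in> measurable M (count_space UNIV)"
    and E_pos: "\<And>t i. 1 \<le> t \<Longrightarrow> i \<in> {1..n} \<Longrightarrow> measure M {\<omega> \<in> space M. E t i \<omega> > 0} > 0"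
    and indep_round: "\<And>t. 1 \<le> t \<Longrightarrow> prob_space.indep_set M
                 (sigma_sets (space M) (favano_S_events M S t \<union> favano_E_events M n E t))
                 (sigma_sets (space M) (favano_other_events M n xi S E t))"
    and indep_S_E: "\<And>t. 1 \<le> t \<Longrightarrow> prob_space.indep_set M
                 (sigma_sets (space M) (favano_S_events M S t))
                 (sigma_sets (space M) (favano_E_events M n E t))"
    \<comment> \<open>all expectations appearing are finite\<close>
    and int_h: "\<And>t i q. i \<in> {1..n} \<Longrightarrow> 1 \<le> q \<Longrightarrow> integrable M (\<lambda>\<omega>.
                   (norm (grad i (favano_query (grad i) eta
                      (snd (favano_state M stoch grad eta K s w0 xi S E t \<omega>) i)
                      (\<lambda>r. xi (Suc t) i r \<omega>) q)))\<^sup>2)"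
    and int_dev: "\<And>t i. i \<in> {1..n} \<Longrightarrow> integrable M (\<lambda>\<omega>.
                   (norm (snd (favano_state M stoch grad eta K s w0 xi S E t \<omega>) i
                          - favano_mu n (favano_state M stoch grad eta K s w0 xi S E t \<omega>)))\<^sup>2)"
    and int_gmu: "\<And>t i. i \<in> {1..n} \<Longrightarrow> integrable M (\<lambda>\<omega>.
                   (norm (grad i (favano_mu n (favano_state M stoch grad eta K s w0 xi S E t \<omega>))))\<^sup>2)"
  shows "\<forall>i \<in> {1..n}. \<forall>t. \<forall>q \<in> {1..K}.
           (\<integral>\<omega>. (norm (grad i (favano_query (grad i) eta
                      (snd (favano_state M stoch grad eta K s w0 xi S E t \<omega>) i)
                      (\<lambda>r. xi (Suc t) i r \<omega>) q)))\<^sup>2 \<partial>M)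
         \<le> \<sigma>\<^sup>2 / real K ^ 2
           + 16 * L\<^sup>2 * (\<integral>\<omega>. (norm (snd (favano_state M stoch grad eta K s w0 xi S E t \<omega>) i
                          - favano_mu n (favano_state M stoch grad eta K s w0 xi S E t \<omega>)))\<^sup>2 \<partial>M)
           + 8 * (\<integral>\<omega>. (norm (grad i (favano_mu n (favano_state M stoch grad eta K s w0 xi S E t \<omega>))))\<^sup>2 \<partial>M)"
proof (intro ballI allI)
  fix i t q assume i: "i \<in> {1..n}" and q: "q \<in> {1..K}"
  have bX: "(\<integral>\<omega>. (norm (xi (Suc t) i r \<omega>))\<^sup>2 \<partial>M) \<le> \<sigma>\<^sup>2" if r: "1 \<le> r" for r
  proof -
    have "(LINT \<omega>:space M|M. (norm (xi (Suc t) i r \<omega>))\<^sup>2) \<le> \<sigma>\<^sup>2 * measure M (space M)"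
      by (rule xi_var[OF _ i r]) (auto intro: sigma_sets_top)
    moreover have "measure M (space M) = 1" using prob by (rule prob_space.prob_space)
    moreover have "(LINT \<omega>:space M|M. (norm (xi (Suc t) i r \<omega>))\<^sup>2) = (\<integral>\<omega>. (norm (xi (Suc t) i r \<omega>))\<^sup>2 \<partial>M)"
      by (rule set_integral_space) (rule xi_sq_int[OF _ i r], simp)
    ultimately show ?thesis by simp
  qed
  have "\<forall>q \<in> {1..K}. (\<integral>\<omega>. (norm (grad i (favano_query (grad i) eta
                      (snd (favano_state M stoch grad eta K s w0 xi S E t \<omega>) i)
                      (\<lambda>r. xi (Suc t) i r \<omega>) q)))\<^sup>2 \<partial>M)
         \<le> \<sigma>\<^sup>2 / real K ^ 2
           + 16 * L\<^sup>2 * (\<integral>\<omega>. (norm (snd (favano_state M stoch grad eta K s w0 xi S E t \<omega>) i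
                          - favano_mu n (favano_state M stoch grad eta K s w0 xi S E t \<omega>)))\<^sup>2 \<partial>M)
           + 8 * (\<integral>\<omega>. (norm (grad i (favano_mu n (favano_state M stoch grad eta K s w0 xi S E t \<omega>))))\<^sup>2 \<partial>M)"
    apply (rule main_abs[where X="\<lambda>\<omega> r. xi (Suc t) i r \<omega>", OF prob smooth[OF i] L_pos eta_pos eta_small K_pos])
    using int_h[OF i] xi_sq_int[OF _ i] bX int_dev[OF i] int_gmu[OF i] by auto
  thus "(\<integral>\<omega>. (norm (grad i (favano_query (grad i) eta
                      (snd (favano_state M stoch grad eta K s w0 xi S E t \<omega>) i)
                      (\<lambda>r. xi (Suc t) i r \<omega>) q)))\<^sup>2 \<partial>M)
         \<le> \<sigma>\<^sup>2 / real K ^ 2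
           + 16 * L\<^sup>2 * (\<integral>\<omega>. (norm (snd (favano_state M stoch grad eta K s w0 xi S E t \<omega>) i
                          - favano_mu n (favano_state M stoch grad eta K s w0 xi S E t \<omega>)))\<^sup>2 \<partial>M)
           + 8 * (\<integral>\<omega>. (norm (grad i (favano_mu n (favano_state M stoch grad eta K s w0 xi S E t \<omega>))))\<^sup>2 \<partial>M)"
    using q by blast
qed

end
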